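(* The following two statements are equivalent. (i) For every amphicheiral knot $K$ with Conway polynomial $C(z)=C_K(z)$, there is a polynomial $F\in\mathbb Z_4[z^2]$ such that $F^2=C(z)\,C(z^2)\,C(iz)$ in $\mathbb Z_4[z^2]$. (ii) For every amphicheiral knot $K$ with normalized Alexander polynomial $A(t)=A_K(t)$, the Laurent polynomial $A(t)\,A(-t)\,A(t^2)$ is a square in the ring $\mathbb Z_4[t,t^{-1}]$.
   Context: A knot is amphicheiral if it is isotopic to its mirror image, disregarding string orientation. The Conway polynomial $C(z)$ of a knot lies in $1+z^2\mathbb Z[z^2]$; hence $C(iz)$ and $C(z^2)$ are again integer polynomials in $z^2$, and the product $C(z)C(z^2)C(iz)$ is reduced modulo $4$ to give an element of $\mathbb Z_4[z^2]$. The Alexander polynomial $A(t)$ is normalized so that $A(t)=A(t^{-1})$ and $A(1)=1$; it is related to the Conway polynomial by $A(t)=C(t^{1/2}-t^{-1/2})$. *)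

theory Defs
  imports "HOL-Computational_Algebra.Polynomial" "HOL-Library.Numeral_Type" "HOL-Library.Poly_Mapping"
begin

definition conway_type :: "int poly \<Rightarrow> bool" where
  "conway_type C \<longleftrightarrow> coeff C 0 = 1 \<and> (\<forall>n. odd n \<longrightarrow> coeff C n = 0)"

text \<open>For C in Z[z^2], C(s) = sum_j c_(2j) (s^2)^j only depends on w = s^2.
  conway_eval C w is the value C(s) for any s with s^2 = w, computed in an
  arbitrary commutative ring (integer coefficients reduced via of_int).\<close>
definition conway_eval :: "int poly \<Rightarrow> 'a::comm_ring_1 \<Rightarrow> 'a" where
  "conway_eval C w = (\<Sum>j\<le>degree C. of_int (coeff C (2 * j)) * w ^ j)"

definition even_poly :: "'a::zero poly \<Rightarrow> bool" where
  "even_poly p \<longleftrightarrow> (\<forall>n. odd n \<longrightarrow> coeff p n = 0)"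

text \<open>The ring Z_4[t,t^-1] of Laurent polynomials = group ring of Z over Z_4.\<close>
type_synonym laurent4 = "int \<Rightarrow>\<^sub>0 4"

definition lt :: laurent4 where "lt = Poly_Mapping.single 1 1"
definition lt_inv :: laurent4 where "lt_inv = Poly_Mapping.single (-1) 1"

text \<open>Alexander polynomial A(s) = C(s^(1/2) - s^(-1/2)), where s is a unit with
  inverse sinv; note (s^(1/2) - s^(-1/2))^2 = s - 2 + s^(-1).\<close>
definition alexander_eval :: "int poly \<Rightarrow> laurent4 \<Rightarrow> laurent4 \<Rightarrow> laurent4" where
  "alexander_eval C s sinv = conway_eval C (s - 2 + sinv)"

end

theory Submission
  imports Defs
begin

lemma exhaust4: "(x::4) = 0 \<or> x = 1 \<or> x = 2 \<or> x = 3"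
proof (induct x rule: bit0.induct)
  case (1 z)
  then have "z = 0 \<or> z = 1 \<or> z = 2 \<or> z = 3" by auto
  then show ?case by auto
qed

lemma two_sq: "2 * (c::4)^2 = 0 \<Longrightarrow> 2 * c = 0"
  using exhaust4[of c] by (auto simp: power2_eq_square)

lemma two_sq2: "2 * (c::4) = 0 \<Longrightarrow> c^2 = 0"
  using exhaust4[of c] by (auto simp: power2_eq_square)

lemma four_poly: "(4 :: 4 poly) = 0"
  by (simp add: numeral_poly)

lemma four0: "(4::4) = 0" by simp

lemma pCons_split: "pCons c p = [:c:] + [:0,1:] * p" for c :: 4
  by simp

lemma two_const: "(2::4 poly) * [:c:] = [:2*c:]"
  by (simp add: numeral_poly)

lemma const_sq: "[:c:]^2 = [:c^2:]" for c :: 4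
  by (simp add: power2_eq_square)

lemma par1: "2 * (b::4 poly)^2 = 0 \<Longrightarrow> 2 * b = 0"
proof (induct b)
  case 0 then show ?case by simp
next
  case (pCons c b1)
  let ?X = "[:0,1:] :: 4 poly"
  have sq: "2 * (pCons c b1)^2 = 2 * [:c:]^2 + 4 * ([:c:] * ?X * b1) + ?X^2 * (2 * b1^2)"
    unfolding pCons_split[of c b1]
    by (simp add: power2_eq_square algebra_simps)
  also have "\<dots> = [:2 * c^2:] + ?X^2 * (2 * b1^2)"
    by (simp add: four_poly const_sq two_const numeral_poly four0)
  finally have e: "2 * (pCons c b1)^2 = [:2 * c^2:] + ?X^2 * (2 * b1^2)" .
  have "coeff (2 * (pCons c b1)^2) 0 = 2 * c^2"
    unfolding e by (simp add: power2_eq_square)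
  moreover have "coeff (2 * (pCons c b1)^2) 0 = coeff 0 0" by (simp only: pCons.prems)
  ultimately have "2 * c^2 = 0" by simp
  then have c2: "2 * c = 0" by (rule two_sq)
  then have "?X^2 * (2 * b1^2) = 0" using pCons.prems e
    by (simp add: power2_eq_square mult.assoc)
  then have "2 * b1^2 = 0" 
    by (simp add: power2_eq_square)
  then have "2 * b1 = 0" by (rule pCons.hyps)
  moreover have "c * 2 = 0" using c2 by (simp add: mult.commute)
  ultimately show ?case using c2 pCons_split[of c b1]
    by (simp add: algebra_simps two_const numeral_poly)
qed

lemma par2: "2 * (b::4 poly) = 0 \<Longrightarrow> b^2 = 0"
proof (induct b)
  case 0 then show ?case by simp
next
  case (pCons c b1)
  let ?X = "[:0,1:] :: 4 poly"
  have e: "2 * pCons c b1 = [:2*c:] + ?X * (2 * b1)"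
    unfolding pCons_split[of c b1] by (simp add: algebra_simps two_const numeral_poly)
  have "coeff (2 * pCons c b1) 0 = 2 * c" unfolding e by simp
  moreover have "coeff (2 * pCons c b1) 0 = coeff 0 0" by (simp only: pCons.prems)
  ultimately have c2: "2 * c = 0" by simp
  then have "?X * (2 * b1) = 0" using pCons.prems e by simp
  then have "2 * b1 = 0" by simp
  then have b1: "b1^2 = 0" by (rule pCons.hyps)
  have "(pCons c b1)^2 = [:c:]^2 + (2 * [:c:]) * ?X * b1 + ?X^2 * b1^2"
    unfolding pCons_split[of c b1]
    by (simp add: power2_eq_square algebra_simps)
  moreover have "c * 2 = 0" using c2 by (simp add: mult.commute)
  ultimately show ?case using b1 c2 two_sq2[OF c2] by (simp add: const_sq two_const numeral_poly)
qed

definition X2 :: "4 poly" where "X2 = monom 1 2"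

lemma coeff_pc: "coeff (pcompose p X2) (2*n) = coeff p n \<and> coeff (pcompose p X2) (2*n+1) = 0"
proof (induct p arbitrary: n)
  case 0 then show ?case by simp
next
  case (pCons a p)
  have e: "pcompose (pCons a p) X2 = [:a:] + monom 1 2 * pcompose p X2"
    by (simp add: pcompose_pCons X2_def)
  show ?case
  proof (cases n)
    case 0 then show ?thesis unfolding e by (simp add: coeff_monom_mult)
  next
    case (Suc m)
    have "2 * n - 2 = 2 * m" "2 * n + 1 - 2 = 2 * m + 1" using Suc by auto
    then show ?thesis unfolding e using pCons.hyps(2)[of m] Suc by (simp add: coeff_monom_mult)
  qed
qed

lemma even_pc: "even_poly (pcompose p X2)"
  unfolding even_poly_def
proof (intro allI impI)
  fix n :: nat assume "odd n"
  then obtain m where "n = 2*m+1" by (metis oddE)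
  then show "coeff (pcompose p X2) n = 0" using coeff_pc by simp
qed

lemma pc_inj: "pcompose p X2 = pcompose q X2 \<Longrightarrow> p = q"
  by (metis coeff_pc poly_eqI)

lemma even_decomp: assumes "even_poly F" shows "\<exists>f. F = pcompose f X2"
proof -
  define f where "f = Poly (map (\<lambda>n. coeff F (2*n)) [0..<Suc (degree F)])"
  have cf: "coeff f n = coeff F (2*n)" for n
  proof (cases "n < Suc (degree F)")
    case True then show ?thesis by (simp add: f_def nth_default_def del: upt_Suc)
  next
    case False then have "degree F < 2*n" by simp
    then show ?thesis using False by (simp add: f_def nth_default_def coeff_eq_0)
  qed
  have "F = pcompose f X2"
  proof (rule poly_eqI)
    fix k
    show "coeff F k = coeff (pcompose f X2) k"
    proof (cases "even k")
      case True then obtain m where "k = 2*m" by blast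
      then show ?thesis using coeff_pc[of f m] cf by simp
    next
      case False then obtain m where "k = 2*m+1" by (metis oddE)
      then show ?thesis using coeff_pc[of f m] assms False unfolding even_poly_def by simp
    qed
  qed
  then show ?thesis by blast
qed

lemma pcompose_power: "pcompose (p ^ n) q = (pcompose p q) ^ n"
proof (induct n)
  case 0 show ?case by (simp, metis one_pCons pcompose_const)
next
  case (Suc n) then show ?case by (simp add: pcompose_mult)
qed

lemma conway_pc: "conway_eval C (pcompose w X2) = pcompose (conway_eval C w) X2"
  unfolding conway_eval_def
  by (simp add: pcompose_sum pcompose_mult pcompose_power of_int_poly pcompose_smult)


definition c4 :: "4 \<Rightarrow> laurent4" where "c4 a = Poly_Mapping.single 0 a"
definition uu :: laurent4 where "uu = lt - 2 + lt_inv"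
definition psi :: "4 poly \<Rightarrow> laurent4" where "psi p = poly (map_poly c4 p) uu"

lemma c4_0[simp]: "c4 0 = 0" by (simp add: c4_def)
lemma c4_add: "c4 (a + b) = c4 a + c4 b" by (simp add: c4_def single_add)
lemma c4_mult: "c4 (a * b) = c4 a * c4 b" by (simp add: c4_def mult_single)

lemma psi_0[simp]: "psi 0 = 0" by (simp add: psi_def)
lemma psi_pCons: "psi (pCons a p) = c4 a + uu * psi p"
  by (simp add: psi_def map_poly_pCons)
lemma psi_const: "psi [:a:] = c4 a" by (simp add: psi_pCons)

lemma psi_add: "psi (p + q) = psi p + psi q"
proof (induct p q rule: poly_induct2)
  case 0 then show ?case by simp
next
  case (pCons a p b q) then show ?case by (simp add: psi_pCons c4_add algebra_simps)
qed

lemma psi_smult: "psi (smult a p) = c4 a * psi p"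
  by (induct p) (simp_all add: psi_pCons c4_mult algebra_simps)

lemma psi_mult: "psi (p * q) = psi p * psi q"
  by (induct p) (simp_all add: psi_pCons psi_add psi_smult algebra_simps)

lemma psi_minus: "psi (- p) = - psi p"
  using psi_add[of p "-p"] by (simp add: add_eq_0_iff2)

lemma psi_diff: "psi (p - q) = psi p - psi q"
  using psi_add[of p "-q"] psi_minus[of q] by simp

lemma psi_1: "psi 1 = 1"
  by (simp add: one_pCons psi_const c4_def)

lemma psi_power: "psi (p ^ n) = psi p ^ n"
  by (induct n) (simp_all add: psi_1 psi_mult)

lemma psi_of_int: "psi (of_int k) = of_int k"
  by (simp add: of_int_poly psi_const c4_def)

lemma psi_sum: "psi (sum f A) = sum (\<lambda>i. psi (f i)) A"
  by (induct A rule: infinite_finite_induct) (simp_all add: psi_add)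

lemma psi_X: "psi [:0,1:] = uu"
  by (simp add: psi_pCons psi_const c4_def)

lemma psi_conway: "psi (conway_eval C w) = conway_eval C (psi w)"
  unfolding conway_eval_def
  by (simp add: psi_sum psi_mult psi_power psi_of_int)

lemma L4: "(4::laurent4) = 0"
  by (metis single_numeral four0 single_zero)

lemma tt: "lt * lt_inv = 1" unfolding lt_def lt_inv_def by (simp add: mult_single)

lemma lt_sq: "lt^2 = (uu + 2) * lt - 1"
  using tt by (simp add: uu_def power2_eq_square algebra_simps)

lemma lt_inv_eq: "lt_inv = uu + 2 - lt"
  by (simp add: uu_def)


lemma lookup_mult_single: "Poly_Mapping.lookup (Y * Poly_Mapping.single j c) k = Poly_Mapping.lookup Y (k - j) * (c::4)"
  for Y :: laurent4
proof -
  have "\<And>l. Sum_any (\<lambda>q. (c when j = q) when k = l + q) = (c when l = k - j)"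
  proof -
    fix l
    have "Sum_any (\<lambda>q. (c when j = q) when k = l + q) = Sum_any (\<lambda>q. (c when k = l + j) when j = q)"
      by (rule Sum_any.cong) (auto simp: when_def)
    also have "\<dots> = (c when l = k - j)" by (simp add: when_def)
    finally show "Sum_any (\<lambda>q. (c when j = q) when k = l + q) = (c when l = k - j)" .
  qed
  then show ?thesis
    by (simp add: lookup_mult lookup_single mult_when)
qed

lemma lookup_lt: "Poly_Mapping.lookup (Y * lt) k = Poly_Mapping.lookup Y (k - 1)"
  by (simp add: lt_def lookup_mult_single)

lemma uu_single: "uu = Poly_Mapping.single 1 1 - Poly_Mapping.single 0 2 + Poly_Mapping.single (-1) 1"
  by (simp add: uu_def lt_def lt_inv_def)

lemma lookup_mult2: "Poly_Mapping.lookup (Y * 2) k = 2 * Poly_Mapping.lookup Y k" for Y :: laurent4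
  using lookup_mult_single[of Y 0 2 k] by (simp add: mult.commute)

lemma lookup_uu: "Poly_Mapping.lookup (uu * (Y::laurent4)) k =
   Poly_Mapping.lookup Y (k - 1) - 2 * Poly_Mapping.lookup Y k + Poly_Mapping.lookup Y (k + 1)"
  by (simp add: uu_single algebra_simps lookup_mult_single lookup_add lookup_minus lookup_mult2)

lemma lookup_c4: "Poly_Mapping.lookup (c4 a) k = (if k = 0 then a else 0)"
  by (simp add: c4_def lookup_single when_def)

lemma psi_coeffs: "p \<noteq> 0 \<Longrightarrow>
   (\<forall>k. k > int (degree p) \<longrightarrow> Poly_Mapping.lookup (psi p) k = 0) \<and>
   Poly_Mapping.lookup (psi p) (int (degree p)) = lead_coeff p \<and>
   (\<forall>k. k < - int (degree p) \<longrightarrow> Poly_Mapping.lookup (psi p) k = 0) \<and>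
   Poly_Mapping.lookup (psi p) (- int (degree p)) = lead_coeff p"
proof (induct p)
  case 0 then show ?case by simp
next
  case (pCons a p)
  show ?case
  proof (cases "p = 0")
    case True
    then show ?thesis by (simp add: psi_pCons lookup_c4)
  next
    case False
    note IH = pCons.hyps(2)[OF False]
    let ?n = "int (degree p)"
    have dg: "int (degree (pCons a p)) = ?n + 1" using False by simp
    have lc: "lead_coeff (pCons a p) = lead_coeff p" using False by simp
    have lk: "Poly_Mapping.lookup (psi (pCons a p)) k = (if k = 0 then a else 0) +
       (Poly_Mapping.lookup (psi p) (k - 1) - 2 * Poly_Mapping.lookup (psi p) k + Poly_Mapping.lookup (psi p) (k + 1))" for k
      by (simp add: psi_pCons lookup_add lookup_uu lookup_c4)
    show ?thesis unfolding dg lc lk using IH by auto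
  qed
qed

lemma psi_inj2: assumes "psi c + psi d * lt = 0" shows "c = 0 \<and> d = 0"
proof -
  have lk: "Poly_Mapping.lookup (psi c) k + Poly_Mapping.lookup (psi d) (k - 1) = 0" for k
    using arg_cong[OF assms, of "\<lambda>Y. Poly_Mapping.lookup Y k"] by (simp add: lookup_add lookup_lt)
  let ?m = "int (degree c)" and ?n = "int (degree d)"
  have A: "c \<noteq> 0 \<Longrightarrow> d \<noteq> 0 \<and> ?m - 1 \<le> ?n"
  proof -
    assume c: "c \<noteq> 0"
    have "Poly_Mapping.lookup (psi d) (?m - 1) \<noteq> 0"
      using lk[of ?m] psi_coeffs[OF c] c by (auto simp: add_eq_0_iff2)
    moreover have d: "d \<noteq> 0" using calculation by (cases "d = 0") (auto simp: psi_def)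
    ultimately show ?thesis using psi_coeffs[OF d] by (meson not_le)
  qed
  have B: "d \<noteq> 0 \<Longrightarrow> c \<noteq> 0 \<and> ?n + 1 \<le> ?m"
  proof -
    assume d: "d \<noteq> 0"
    have "Poly_Mapping.lookup (psi c) (?n + 1) \<noteq> 0"
      using lk[of "?n + 1"] psi_coeffs[OF d] d by (auto simp: add_eq_0_iff2)
    moreover have c: "c \<noteq> 0" using calculation by (cases "c = 0") (auto simp: psi_def)
    ultimately show ?thesis using psi_coeffs[OF c] by (meson not_le)
  qed
  show ?thesis
  proof (rule ccontr)
    assume "\<not> (c = 0 \<and> d = 0)"
    then have c: "c \<noteq> 0" and d: "d \<noteq> 0" using A B by blast+
    then have m: "?m = ?n + 1" using A B by auto
    have "Poly_Mapping.lookup (psi d) (- ?m - 1) = 0" using psi_coeffs[OF d] m by auto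
    then have "Poly_Mapping.lookup (psi c) (- ?m) = 0" using lk[of "- ?m"] by simp
    then show False using psi_coeffs[OF c] c by simp
  qed
qed


lemma psi_2: "psi 2 = 2"
  using psi_of_int[of 2] by simp

lemma psi_X2: "psi ([:0,1:] + 2) = uu + 2"
  using psi_of_int[of 2] by (simp add: psi_add psi_X)

definition decomp :: "laurent4 \<Rightarrow> bool" where
  "decomp G \<longleftrightarrow> (\<exists>a b. G = psi a + psi b * lt)"

lemma decomp_add: "decomp G \<Longrightarrow> decomp H \<Longrightarrow> decomp (G + H)"
  unfolding decomp_def
proof (elim exE)
  fix a b a' b' assume "G = psi a + psi b * lt" "H = psi a' + psi b' * lt"
  then have "G + H = psi (a + a') + psi (b + b') * lt" by (simp add: psi_add algebra_simps)
  then show "\<exists>a b. G + H = psi a + psi b * lt" by blast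
qed

lemma decomp_lt: "decomp G \<Longrightarrow> decomp (G * lt)"
  unfolding decomp_def
proof (elim exE)
  fix a b assume G: "G = psi a + psi b * lt"
  have "G * lt = psi a * lt + psi b * lt^2" by (simp add: G power2_eq_square algebra_simps)
  also have "\<dots> = psi (- b) + psi (a + ([:0,1:] + 2) * b) * lt"
  proof -
    have "psi (a + ([:0,1:] + 2) * b) = psi a + (uu + 2) * psi b"
      by (simp only: psi_add psi_mult psi_X psi_2)
    then show ?thesis by (simp add: lt_sq psi_minus algebra_simps)
  qed
  finally show "\<exists>a b. G * lt = psi a + psi b * lt" by blast
qed

lemma decomp_lt_inv: "decomp G \<Longrightarrow> decomp (G * lt_inv)"
  unfolding decomp_def
proof (elim exE)
  fix a b assume G: "G = psi a + psi b * lt"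
  have "G * lt_inv = psi a * (uu + 2) - psi a * lt + psi b * (uu + 2) * lt - psi b * lt^2"
    by (simp add: G lt_inv_eq power2_eq_square algebra_simps)
  also have "\<dots> = psi (a * ([:0,1:] + 2) + b) + psi (- a) * lt"
  proof -
    have "psi (a * ([:0,1:] + 2) + b) = psi a * (uu + 2) + psi b"
      by (simp only: psi_add psi_mult psi_X psi_2)
    then show ?thesis by (simp add: lt_sq psi_minus algebra_simps)
  qed
  finally show "\<exists>a b. G * lt_inv = psi a + psi b * lt" by blast
qed

lemma decomp_c4: "decomp (c4 v)"
  unfolding decomp_def by (rule exI[of _ "[:v:]"], rule exI[of _ 0]) (simp add: psi_const)

lemma lt_pow: "lt ^ n = Poly_Mapping.single (int n) 1"
  by (induct n) (simp_all add: lt_def mult_single algebra_simps)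

lemma lt_inv_pow: "lt_inv ^ n = Poly_Mapping.single (- int n) 1"
  by (induct n) (simp_all add: lt_inv_def mult_single algebra_simps)

lemma decomp_single: "decomp (Poly_Mapping.single k v)"
proof -
  have p1: "decomp (c4 v * lt ^ n)" for n
  proof (induct n)
    case 0 then show ?case using decomp_c4 by simp
  next
    case (Suc n)
    have "c4 v * lt ^ Suc n = (c4 v * lt ^ n) * lt" by (simp only: power_Suc2 mult.assoc)
    then show ?case using decomp_lt[OF Suc] by (simp only:)
  qed
  have p2: "decomp (c4 v * lt_inv ^ n)" for n
  proof (induct n)
    case 0 then show ?case using decomp_c4 by simp
  next
    case (Suc n)
    have "c4 v * lt_inv ^ Suc n = (c4 v * lt_inv ^ n) * lt_inv" by (simp only: power_Suc2 mult.assoc)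
    then show ?case using decomp_lt_inv[OF Suc] by (simp only:)
  qed
  show ?thesis
  proof (cases "k \<ge> 0")
    case True
    then have "Poly_Mapping.single k v = c4 v * lt ^ nat k"
      by (simp add: lt_pow c4_def mult_single)
    then show ?thesis using p1 by simp
  next
    case False
    then have "Poly_Mapping.single k v = c4 v * lt_inv ^ nat (- k)"
      by (simp add: lt_inv_pow c4_def mult_single)
    then show ?thesis using p2 by simp
  qed
qed

lemma update_eq: "Poly_Mapping.update k v f = f + Poly_Mapping.single k (v - Poly_Mapping.lookup f k)"
  for f :: laurent4
  by (rule poly_mapping_eqI) (simp add: lookup_update lookup_add lookup_single when_def)

lemma decomp_all: "decomp (G :: laurent4)"
proof (induct G rule: update_induct)
  case const then show ?case using decomp_c4[of 0] by simp
next
  case (update f a b) then show ?case by (simp add: update_eq decomp_add decomp_single)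
qed


lemma main_equiv: "(\<exists>F :: 4 poly. even_poly F \<and> F^2 = pcompose h X2) \<longleftrightarrow> (\<exists>G :: laurent4. G^2 = psi h)"
proof
  assume "\<exists>F :: 4 poly. even_poly F \<and> F^2 = pcompose h X2"
  then obtain F where F: "even_poly F" "F^2 = pcompose h X2" by blast
  obtain f where f: "F = pcompose f X2" using even_decomp[OF F(1)] by blast
  have "pcompose (f^2) X2 = pcompose h X2" using F(2) f by (simp add: pcompose_power)
  then have "f^2 = h" by (rule pc_inj)
  then have "(psi f)^2 = psi h" by (metis psi_power)
  then show "\<exists>G :: laurent4. G^2 = psi h" by blast
next
  assume "\<exists>G :: laurent4. G^2 = psi h"
  then obtain G where G: "G^2 = psi h" by blast
  obtain a b where ab: "G = psi a + psi b * lt" using decomp_all[of G] unfolding decomp_def by blast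
  define e where "e = 2*a*b + b^2*([:0,1:]+2)"
  have pe: "psi e = 2 * psi a * psi b + psi b^2 * (uu + 2)"
    unfolding e_def by (simp only: psi_add psi_mult psi_power psi_X psi_2)
  have pd: "psi (a^2 - b^2 - h) = psi a^2 - psi b^2 - psi h"
    by (simp only: psi_diff psi_power)
  have "G^2 = psi a^2 + 2 * psi a * psi b * lt + psi b^2 * lt^2"
    unfolding ab by (simp add: power2_eq_square algebra_simps)
  also have "\<dots> = psi a^2 - psi b^2 + (2 * psi a * psi b + psi b^2 * (uu + 2)) * lt"
    by (simp add: lt_sq algebra_simps)
  finally have "psi (a^2 - b^2 - h) + psi e * lt = 0"
    using G pe pd by simp
  then have z: "a^2 - b^2 - h = 0" "e = 0" using psi_inj2 by blast+
  have "2 * e = 4 * a * b + [:0,1:] * (2 * b^2) + 4 * b^2"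
    unfolding e_def by (simp add: algebra_simps)
  then have "[:0,1:] * (2 * b^2) = 0" using z(2) by (simp add: four_poly)
  then have "2 * b^2 = 0" by simp
  then have "2 * b = 0" by (rule par1)
  then have "b^2 = 0" by (rule par2)
  then have h: "h = a^2" using z(1) by simp
  have "even_poly (pcompose a X2) \<and> (pcompose a X2)^2 = pcompose h X2"
    using even_pc h by (simp add: pcompose_power)
  then show "\<exists>F :: 4 poly. even_poly F \<and> F^2 = pcompose h X2" by blast
qed

definition hh :: "int poly \<Rightarrow> 4 poly" where
  "hh C = conway_eval C [:0,1:] * conway_eval C ([:0,1:]^2) * conway_eval C (- [:0,1:])"

lemma side1: "conway_eval C (monom 1 2) * conway_eval C (monom 1 4) * conway_eval C (- monom 1 2)
   = pcompose (hh C) X2"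
proof -
  have x: "pcompose [:0,1:] X2 = X2" by (simp add: pcompose_pCons)
  have x2: "X2^2 = monom 1 4" by (simp add: X2_def power2_eq_square mult_monom)
  have x3: "pcompose (- [:0,1:]) X2 = - X2" by (simp only: pcompose_uminus x)
  have x4: "pcompose ([:0,1:]^2) X2 = monom 1 4" by (simp only: pcompose_power x x2)
  show ?thesis unfolding hh_def pcompose_mult unfolding conway_pc[symmetric] unfolding x x3 x4 unfolding X2_def ..
qed

lemma side2: "alexander_eval C lt lt_inv * alexander_eval C (- lt) (- lt_inv) * alexander_eval C (lt ^ 2) (lt_inv ^ 2)
   = psi (hh C)"
proof -
  have e1: "lt - 2 + lt_inv = uu" by (simp add: uu_def)
  have "- lt - 2 + - lt_inv = - uu - 4" by (simp add: uu_def algebra_simps)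
  then have e2: "- lt - 2 + - lt_inv = - uu" by (simp add: L4)
  have "uu^2 = lt^2 - 2 + lt_inv^2 + 2 * (lt * lt_inv - 1) + 4 * (2 - lt - lt_inv)"
    by (simp add: uu_def power2_eq_square algebra_simps)
  then have e3: "lt^2 - 2 + lt_inv^2 = uu^2" by (simp add: L4 tt)
  have "psi (hh C) = conway_eval C uu * conway_eval C (uu^2) * conway_eval C (- uu)"
    unfolding hh_def by (simp only: psi_mult psi_conway psi_X psi_power psi_minus)
  then show ?thesis unfolding alexander_eval_def e1 e2 e3
    by (simp add: mult_ac)
qed

theorem proposition1p2:
  fixes amphicheiral :: "'k \<Rightarrow> bool" and conway :: "'k \<Rightarrow> int poly"
  assumes "\<forall>K. conway_type (conway K)"
  shows "(\<forall>K. amphicheiral K \<longrightarrow>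
            (\<exists>F :: 4 poly. even_poly F \<and>
               F ^ 2 = conway_eval (conway K) (monom 1 2)
                     * conway_eval (conway K) (monom 1 4)
                     * conway_eval (conway K) (- monom 1 2)))
     \<longleftrightarrow>
         (\<forall>K. amphicheiral K \<longrightarrow>
            (\<exists>G :: laurent4.
               G ^ 2 = alexander_eval (conway K) lt lt_inv
                     * alexander_eval (conway K) (- lt) (- lt_inv)
                     * alexander_eval (conway K) (lt ^ 2) (lt_inv ^ 2)))"
  unfolding side1 side2 main_equiv ..

end
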